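(* Let $f=f^\alpha$ be a developable strip along an arc-length parametrized $C^\infty$ embedded curve $\mathbf c:I\to\mathbb R^3$ with curvature $\kappa>0$, and let $\check f$ be its dual. Let $$S:=\{(t,v)\in\Omega_\epsilon:\ \exists\,(t',v')\in\Omega_\epsilon\setminus\{(t,v)\}\text{ with }\phi_f(t,v)=\psi_f(t',v')\},$$ where $\Omega_\epsilon=I\times(-\epsilon,\epsilon)$. Then for sufficiently small $\epsilon>0$, the set $S$ has no interior points.
   Context: Space curves. For a $C^\infty$ curve $\mathbf c:I\to\mathbb R^3$, $I=[a,b]$, parametrized by arc length with curvature $\kappa=|\mathbf c''|>0$, set $\mathbf e=\mathbf c'$, $\mathbf n=\mathbf c''/\kappa$, $\mathbf b=\mathbf e\times\mathbf n$, and torsion $\tau:=\mathbf n'\cdot\mathbf b$. Developable strips. Given $C^\infty$ functions $\alpha,\beta$ on $I$ with $0<|\alpha(t)|<\pi/2$ and $0<\beta(t)<\pi$, the ruled surface is $f(t,v)=\mathbf c(t)+v\,\xi(t)$, $(t,v)\in I\times(-\epsilon,\epsilon)$, with $\xi=\cos\beta\,\mathbf e+\sin\beta(\cos\alpha\,\mathbf n+\sin\alpha\,\mathbf b)$; $\alpha$ is the first angular function. $f$ is developable iff $\cot\beta=(\alpha'+\tau)/(\kappa\sin\alpha)$; the developable strip with first angular function $\alpha$ is denoted $f^\alpha$. The dual of $f=f^\alpha$ is $\check f:=f^{-\alpha}$. Origami maps. $\phi_f(t,v)=f(t,v)$ for $v\ge0$ and $\phi_f(t,v)=\check f(t,v)$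 for $v<0$; $\psi_f(t,v)=\check f(t,v)$ for $v\ge0$ and $\psi_f(t,v)=f(t,v)$ for $v<0$. *)

theory Defs
  imports "HOL-Analysis.Analysis"
begin

(* C^infinity on a (closed) interval I: derivatives of all orders exist, taken within I
   (one-sided at the endpoints). *)
definition Cinf_on :: "real set \<Rightarrow> (real \<Rightarrow> 'a::real_normed_vector) \<Rightarrow> bool" where
  "Cinf_on I g \<longleftrightarrow> (\<exists>D. (\<forall>t\<in>I. D 0 t = g t) \<and>
      (\<forall>k. \<forall>t\<in>I. (D k has_vector_derivative D (Suc k) t) (at t within I)))"

definition vd :: "real set \<Rightarrow> (real \<Rightarrow> 'a::real_normed_vector) \<Rightarrow> real \<Rightarrow> 'a" where
  "vd I g t = vector_derivative g (at t within I)"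

definition tangent :: "real set \<Rightarrow> (real \<Rightarrow> real^3) \<Rightarrow> real \<Rightarrow> real^3" where
  "tangent I c t = vd I c t"

definition curvature :: "real set \<Rightarrow> (real \<Rightarrow> real^3) \<Rightarrow> real \<Rightarrow> real" where
  "curvature I c t = norm (vd I (vd I c) t)"

definition normal :: "real set \<Rightarrow> (real \<Rightarrow> real^3) \<Rightarrow> real \<Rightarrow> real^3" where
  "normal I c t = (1 / curvature I c t) *\<^sub>R vd I (vd I c) t"

definition binormal :: "real set \<Rightarrow> (real \<Rightarrow> real^3) \<Rightarrow> real \<Rightarrow> real^3" where
  "binormal I c t = cross3 (tangent I c t) (normal I c t)"

definition torsion :: "real set \<Rightarrow> (real \<Rightarrow> real^3) \<Rightarrow> real \<Rightarrow> real" where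
  "torsion I c t = vd I (normal I c) t \<bullet> binormal I c t"

definition strip_beta :: "real set \<Rightarrow> (real \<Rightarrow> real^3) \<Rightarrow> (real \<Rightarrow> real) \<Rightarrow> real \<Rightarrow> real" where
  "strip_beta I c \<alpha> t = (THE \<beta>. 0 < \<beta> \<and> \<beta> < pi \<and>
      cot \<beta> = (vd I \<alpha> t + torsion I c t) / (curvature I c t * sin (\<alpha> t)))"

definition ruling :: "real set \<Rightarrow> (real \<Rightarrow> real^3) \<Rightarrow> (real \<Rightarrow> real) \<Rightarrow> real \<Rightarrow> real^3" where
  "ruling I c \<alpha> t = (let \<beta> = strip_beta I c \<alpha> t in
     cos \<beta> *\<^sub>R tangent I c t +
     sin \<beta> *\<^sub>R (cos (\<alpha> t) *\<^sub>R normal I c t + sin (\<alpha> t) *\<^sub>R binormal I c t))"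

definition dev_strip :: "real set \<Rightarrow> (real \<Rightarrow> real^3) \<Rightarrow> (real \<Rightarrow> real) \<Rightarrow> real \<times> real \<Rightarrow> real^3" where
  "dev_strip I c \<alpha> p = c (fst p) + snd p *\<^sub>R ruling I c \<alpha> (fst p)"

definition dual_strip :: "real set \<Rightarrow> (real \<Rightarrow> real^3) \<Rightarrow> (real \<Rightarrow> real) \<Rightarrow> real \<times> real \<Rightarrow> real^3" where
  "dual_strip I c \<alpha> = dev_strip I c (\<lambda>t. - \<alpha> t)"

definition origami_phi :: "real set \<Rightarrow> (real \<Rightarrow> real^3) \<Rightarrow> (real \<Rightarrow> real) \<Rightarrow> real \<times> real \<Rightarrow> real^3" where
  "origami_phi I c \<alpha> p = (if snd p \<ge> 0 then dev_strip I c \<alpha> p else dual_strip I c \<alpha> p)"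

definition origami_psi :: "real set \<Rightarrow> (real \<Rightarrow> real^3) \<Rightarrow> (real \<Rightarrow> real) \<Rightarrow> real \<times> real \<Rightarrow> real^3" where
  "origami_psi I c \<alpha> p = (if snd p \<ge> 0 then dual_strip I c \<alpha> p else dev_strip I c \<alpha> p)"

definition Omega :: "real \<Rightarrow> real \<Rightarrow> real \<Rightarrow> (real \<times> real) set" where
  "Omega a b \<epsilon> = {p. fst p \<in> {a..b} \<and> snd p \<in> {-\<epsilon><..<\<epsilon>}}"

end

theory Submission imports Defs begin

lemma vd_eq:
  assumes "a < b" "t \<in> {a..b}" "\<And>s. s \<in> {a..b} \<Longrightarrow> g s = h s"
    "(h has_vector_derivative d) (at t within {a..b})"
  shows "vd {a..b} g t = d"
proof -
  have "(g has_vector_derivative d) (at t within {a..b})"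
    using has_vector_derivative_transform[of t "{a..b}" g h d] assms by auto
  then show ?thesis unfolding vd_def
    using vector_derivative_within_cbox[of a b t g d] assms by simp
qed

lemma Cinf_cont:
  assumes "\<forall>k. \<forall>t\<in>I. (D k has_vector_derivative D (Suc k) t) (at t within I)"
  shows "continuous_on I (D k)"
  using assms continuous_on_eq_continuous_within has_vector_derivative_continuous by blast

lemma normal_deriv:
  fixes D2 D3 :: "real \<Rightarrow> real^3"
  assumes "(D2 has_vector_derivative D3 t) (at t within S)" "D2 t \<noteq> 0"
  shows "((\<lambda>s. (1 / norm (D2 s)) *\<^sub>R D2 s) has_vector_derivative
      ((1 / norm (D2 t)) *\<^sub>R D3 t - ((D2 t \<bullet> D3 t) / norm (D2 t) ^ 3) *\<^sub>R D2 t)) (at t within S)"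
proof -
  have n: "((\<lambda>s. norm (D2 s)) has_real_derivative (sgn (D2 t) \<bullet> D3 t)) (at t within S)"
  proof -
    have d0: "(D2 has_derivative (\<lambda>h. h *\<^sub>R D3 t)) (at t within S)"
      using assms(1) unfolding has_vector_derivative_def .
    have d1: "(norm has_derivative (\<lambda>h. h \<bullet> sgn (D2 t))) (at (D2 t) within D2 ` S)"
      by (rule has_derivative_at_withinI[OF has_derivative_norm[OF assms(2)]])
    have "((norm \<circ> D2) has_derivative ((\<lambda>h. h \<bullet> sgn (D2 t)) \<circ> (\<lambda>h. h *\<^sub>R D3 t))) (at t within S)"
      by (rule diff_chain_within[OF d0 d1])
    then have "((\<lambda>s. norm (D2 s)) has_derivative (\<lambda>h. (sgn (D2 t) \<bullet> D3 t) * h)) (at t within S)"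
      unfolding o_def by (rule has_derivative_eq_rhs) (simp add: fun_eq_iff inner_commute)
    then show ?thesis
      by (simp add: has_field_derivative_def)
  qed
  have nz: "norm (D2 t) \<noteq> 0" using assms(2) by simp
  have i0: "((\<lambda>s. inverse (norm (D2 s))) has_real_derivative (- ((sgn (D2 t) \<bullet> D3 t) * inverse (norm (D2 t) ^ Suc (Suc 0))))) (at t within S)"
    by (rule DERIV_inverse_fun[OF n nz])
  have sg: "sgn (D2 t) \<bullet> D3 t = (D2 t \<bullet> D3 t) / norm (D2 t)"
    by (simp add: sgn_div_norm divide_inverse)
  have co: "- ((sgn (D2 t) \<bullet> D3 t) * inverse (norm (D2 t) ^ Suc (Suc 0))) = - ((D2 t \<bullet> D3 t) / norm (D2 t) ^ 3)"
    unfolding sg using nz by (simp add: divide_inverse power3_eq_cube power2_eq_square)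
  have "((\<lambda>s. inverse (norm (D2 s)) *\<^sub>R D2 s) has_vector_derivative
      (inverse (norm (D2 t)) *\<^sub>R D3 t + (- ((D2 t \<bullet> D3 t) / norm (D2 t) ^ 3)) *\<^sub>R D2 t)) (at t within S)"
    using has_vector_derivative_scaleR[OF i0 assms(1)] unfolding co by simp
  then show ?thesis by (simp add: inverse_eq_divide)
qed


lemma inner_vd:
  fixes f g :: "real \<Rightarrow> 'a::real_inner"
  assumes "(f has_vector_derivative f') (at t within S)" "(g has_vector_derivative g') (at t within S)"
  shows "((\<lambda>s. f s \<bullet> g s) has_vector_derivative (f' \<bullet> g t + f t \<bullet> g')) (at t within S)"
proof -
  have "((\<lambda>s. f s \<bullet> g s) has_derivative (\<lambda>h. f t \<bullet> (h *\<^sub>R g') + (h *\<^sub>R f') \<bullet> g t)) (at t within S)"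
    using has_derivative_inner[OF assms(1)[unfolded has_vector_derivative_def] assms(2)[unfolded has_vector_derivative_def]] .
  then show ?thesis unfolding has_vector_derivative_def
    by (rule has_derivative_eq_rhs) (simp add: fun_eq_iff algebra_simps)
qed

lemma frame:
  assumes ab: "a < b" and C: "Cinf_on {a..b} c"
    and unit: "\<forall>t\<in>{a..b}. norm (vd {a..b} c t) = 1"
    and kp: "\<forall>t\<in>{a..b}. curvature {a..b} c t > 0"
  shows "continuous_on {a..b} c" "continuous_on {a..b} (tangent {a..b} c)"
    "continuous_on {a..b} (normal {a..b} c)" "continuous_on {a..b} (binormal {a..b} c)"
    "continuous_on {a..b} (torsion {a..b} c)" "continuous_on {a..b} (curvature {a..b} c)"
    "\<forall>t\<in>{a..b}. (c has_vector_derivative tangent {a..b} c t) (at t within {a..b})"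
    "\<forall>t\<in>{a..b}. tangent {a..b} c t \<bullet> tangent {a..b} c t = 1"
    "\<forall>t\<in>{a..b}. normal {a..b} c t \<bullet> normal {a..b} c t = 1"
    "\<forall>t\<in>{a..b}. tangent {a..b} c t \<bullet> normal {a..b} c t = 0"
    "\<forall>t\<in>{a..b}. binormal {a..b} c t \<bullet> binormal {a..b} c t = 1"
    "\<forall>t\<in>{a..b}. tangent {a..b} c t \<bullet> binormal {a..b} c t = 0"
    "\<forall>t\<in>{a..b}. normal {a..b} c t \<bullet> binormal {a..b} c t = 0"
proof -
  let ?I = "{a..b}"
  obtain D where D0: "\<forall>t\<in>?I. D 0 t = c t"
    and DD: "\<forall>k. \<forall>t\<in>?I. (D k has_vector_derivative D (Suc k) t) (at t within ?I)"
    using C unfolding Cinf_on_def by blast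
  have cont: "continuous_on ?I (D k)" for k using Cinf_cont[OF DD] .
  have DDk: "(D k has_vector_derivative D (Suc k) t) (at t within ?I)" if "t \<in> ?I" for k t
    using DD that by auto
  have DD0: "(D 0 has_vector_derivative D 1 t) (at t within ?I)" if "t \<in> ?I" for t
    using DDk[of t 0] that by simp
  have DD1: "(D 1 has_vector_derivative D 2 t) (at t within ?I)" if "t \<in> ?I" for t
    using DDk[of t 1] that by (simp add: numeral_2_eq_2)
  have DD2: "(D 2 has_vector_derivative D 3 t) (at t within ?I)" if "t \<in> ?I" for t
    using DDk[of t 2] that by (simp add: numeral_3_eq_3 numeral_2_eq_2)
  have d1: "vd ?I c t = D 1 t" if "t \<in> ?I" for t
    by (rule vd_eq[OF ab that, of c "D 0" "D 1 t"]) (use D0 DD0 that in auto)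
  have d2: "vd ?I (vd ?I c) t = D 2 t" if "t \<in> ?I" for t
    by (rule vd_eq[OF ab that, of "vd ?I c" "D 1" "D 2 t"]) (use d1 DD1 that in auto)
  have curv: "curvature ?I c t = norm (D 2 t)" if "t \<in> ?I" for t
    using d2 that unfolding curvature_def by simp
  have D2nz: "D 2 t \<noteq> 0" if "t \<in> ?I" for t using kp curv that by fastforce
  have nrm: "normal ?I c t = (1 / norm (D 2 t)) *\<^sub>R D 2 t" if "t \<in> ?I" for t
    using curv d2 that unfolding normal_def by simp
  define N' where "N' t = (1 / norm (D 2 t)) *\<^sub>R D 3 t - ((D 2 t \<bullet> D 3 t) / norm (D 2 t) ^ 3) *\<^sub>R D 2 t" for t
  have dn: "vd ?I (normal ?I c) t = N' t" if "t \<in> ?I" for t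
  proof -
    have "(D 2 has_vector_derivative D 3 t) (at t within ?I)"
      using DD2 that .
    from normal_deriv[of "D 2" "D 3" t, OF this D2nz[OF that]] show ?thesis
      unfolding N'_def by (intro vd_eq[OF ab that]) (auto simp: nrm)
  qed
  have tan: "tangent ?I c t = D 1 t" if "t \<in> ?I" for t using d1 that unfolding tangent_def by simp
  show "continuous_on ?I c" using continuous_on_eq[OF cont[of 0]] D0 by auto
  show cT: "continuous_on ?I (tangent ?I c)" using continuous_on_eq[OF cont[of 1]] tan by auto
  have cn: "continuous_on ?I (\<lambda>t. (1 / norm (D 2 t)) *\<^sub>R D 2 t)"
    using D2nz by (intro continuous_intros cont) auto
  show cN: "continuous_on ?I (normal ?I c)" using continuous_on_eq[OF cn] nrm by auto
  show cB: "continuous_on ?I (binormal ?I c)" unfolding binormal_def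
    by (intro continuous_on_cross cN cT)
  have cN': "continuous_on ?I N'" unfolding N'_def
    using D2nz by (intro continuous_intros cont) auto
  have "continuous_on ?I (\<lambda>t. N' t \<bullet> binormal ?I c t)"
    by (intro continuous_intros cN' cB)
  then show "continuous_on ?I (torsion ?I c)" 
    by (rule continuous_on_eq) (auto simp: torsion_def dn)
  show "continuous_on ?I (curvature ?I c)"
    by (rule continuous_on_eq[of _ "\<lambda>t. norm (D 2 t)"]) (auto intro!: continuous_intros cont simp: curv)
  show "\<forall>t\<in>?I. (c has_vector_derivative tangent ?I c t) (at t within ?I)"
    using DD0 D0 tan has_vector_derivative_transform[of _ ?I c "D 0"] by metis
  show ee: "\<forall>t\<in>?I. tangent ?I c t \<bullet> tangent ?I c t = 1"
    using unit by (simp add: tangent_def norm_eq_1)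
  show nn: "\<forall>t\<in>?I. normal ?I c t \<bullet> normal ?I c t = 1"
  proof
    fix t assume t: "t \<in> ?I"
    have "norm (normal ?I c t) = 1" using nrm[OF t] D2nz[OF t] by simp
    then show "normal ?I c t \<bullet> normal ?I c t = 1" by (simp add: norm_eq_1)
  qed
  have "D 1 t \<bullet> D 2 t = 0" if t: "t \<in> ?I" for t
  proof -
    have h1: "(D 1 has_vector_derivative D 2 t) (at t within ?I)"
      using DD1 t .
    have "vd ?I (\<lambda>s. D 1 s \<bullet> D 1 s) t = D 2 t \<bullet> D 1 t + D 1 t \<bullet> D 2 t"
      using inner_vd[OF h1 h1] by (intro vd_eq[OF ab t]) auto
    moreover have "vd ?I (\<lambda>s. D 1 s \<bullet> D 1 s) t = 0"
      by (rule vd_eq[OF ab t, of _ "\<lambda>s. 1"]) (use ee tan in auto)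
    ultimately show ?thesis by (simp add: inner_commute)
  qed
  then show en: "\<forall>t\<in>?I. tangent ?I c t \<bullet> normal ?I c t = 0"
    using tan nrm by simp
  show "\<forall>t\<in>?I. binormal ?I c t \<bullet> binormal ?I c t = 1"
  proof
    fix t assume t: "t \<in> ?I"
    have "(norm (binormal ?I c t))^2 = 1"
      unfolding binormal_def norm_cross using ee en nn t by (simp add: norm_eq_1[symmetric] power2_norm_eq_inner)
    then show "binormal ?I c t \<bullet> binormal ?I c t = 1" by (simp add: power2_norm_eq_inner)
  qed
  show "\<forall>t\<in>?I. tangent ?I c t \<bullet> binormal ?I c t = 0" "\<forall>t\<in>?I. normal ?I c t \<bullet> binormal ?I c t = 0"
    unfolding binormal_def by (simp_all add: dot_cross_self)
qed

lemma the_cot: "(THE \<beta>. 0 < \<beta> \<and> \<beta> < pi \<and> cot \<beta> = X) = pi/2 - arctan X"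
proof (rule the_equality)
  let ?y = "arctan X"
  have b: "- (pi/2) < ?y" "?y < pi/2" using arctan_bounded by auto
  have "cot (pi/2 - ?y) = tan ?y"
    unfolding cot_def tan_def using sin_cos_eq[of ?y] cos_sin_eq[of ?y] by simp
  then show "0 < pi/2 - ?y \<and> pi/2 - ?y < pi \<and> cot (pi/2 - ?y) = X"
    using b tan_arctan by auto
next
  fix \<beta> assume h: "0 < \<beta> \<and> \<beta> < pi \<and> cot \<beta> = X"
  let ?y = "pi/2 - \<beta>"
  have "tan ?y = cot \<beta>"
    unfolding cot_def tan_def using sin_cos_eq[of \<beta>] cos_sin_eq[of \<beta>] by simp
  then have "arctan X = ?y" using h arctan_tan[of ?y] by auto
  then show "\<beta> = pi/2 - arctan X" by simp
qed

lemma sin_nz: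
  assumes "0 < \<bar>x\<bar>" "\<bar>x\<bar> < pi/2"
  shows "sin x \<noteq> 0"
proof (cases "x > 0")
  case True then show ?thesis using sin_gt_zero[of x] assms by auto
next
  case False then have "0 < -x" "-x < pi" using assms by auto
  then show ?thesis using sin_gt_zero[of "-x"] by auto
qed

lemma cos_pos:
  assumes "\<bar>x\<bar> < pi/2"
  shows "cos x > 0"
  using assms cos_gt_zero_pi by auto

lemma Cinf_neg:
  assumes "Cinf_on I \<alpha>"
  shows "Cinf_on I (\<lambda>t. - \<alpha> t)"
proof -
  obtain D where "\<forall>t\<in>I. D 0 t = \<alpha> t" "\<forall>k. \<forall>t\<in>I. (D k has_vector_derivative D (Suc k) t) (at t within I)"
    using assms unfolding Cinf_on_def by blast
  then show ?thesis unfolding Cinf_on_def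
    by (intro exI[of _ "\<lambda>k t. - D k t"]) (auto intro: has_vector_derivative_minus)
qed


lemma ruling_facts:
  assumes ab: "a < b" and C: "Cinf_on {a..b} c"
    and unit: "\<forall>t\<in>{a..b}. norm (vd {a..b} c t) = 1"
    and kp: "\<forall>t\<in>{a..b}. curvature {a..b} c t > 0"
    and A: "Cinf_on {a..b} \<alpha>" and bd: "\<forall>t\<in>{a..b}. 0 < \<bar>\<alpha> t\<bar> \<and> \<bar>\<alpha> t\<bar> < pi/2"
  shows "continuous_on {a..b} (ruling {a..b} c \<alpha>)"
    "\<forall>t\<in>{a..b}. \<exists>\<beta>. 0 < \<beta> \<and> \<beta> < pi \<and> ruling {a..b} c \<alpha> t =
        cos \<beta> *\<^sub>R tangent {a..b} c t + sin \<beta> *\<^sub>R (cos (\<alpha> t) *\<^sub>R normal {a..b} c t + sin (\<alpha> t) *\<^sub>R binormal {a..b} c t)"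
proof -
  let ?I = "{a..b}"
  obtain D where D0: "\<forall>t\<in>?I. D 0 t = \<alpha> t"
    and DD: "\<forall>k. \<forall>t\<in>?I. (D k has_vector_derivative D (Suc k) t) (at t within ?I)"
    using A unfolding Cinf_on_def by blast
  have cont: "continuous_on ?I (D k)" for k using Cinf_cont[OF DD] .
  have DDk: "(D k has_vector_derivative D (Suc k) t) (at t within ?I)" if "t \<in> ?I" for k t
    using DD that by auto
  have d1: "vd ?I \<alpha> t = D 1 t" if "t \<in> ?I" for t
    by (rule vd_eq[OF ab that, of \<alpha> "D 0" "D 1 t"]) (use D0 DDk[of t 0] that in auto)
  note fr = frame[OF ab C unit kp]
  define X where "X t = (vd ?I \<alpha> t + torsion ?I c t) / (curvature ?I c t * sin (\<alpha> t))" for t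
  have sb: "strip_beta ?I c \<alpha> t = pi/2 - arctan (X t)" for t
    unfolding strip_beta_def X_def by (rule the_cot)
  have ca: "continuous_on ?I \<alpha>" using continuous_on_eq[OF cont[of 0]] D0 by auto
  have snz: "sin (\<alpha> t) \<noteq> 0" if "t \<in> ?I" for t using sin_nz bd that by blast
  have knz: "curvature ?I c t \<noteq> 0" if "t \<in> ?I" for t using kp that by fastforce
  have "continuous_on ?I (\<lambda>t. (D 1 t + torsion ?I c t) / (curvature ?I c t * sin (\<alpha> t)))"
    using snz knz by (intro continuous_intros cont fr(5) fr(6) ca) auto
  then have cX: "continuous_on ?I X"
    by (rule continuous_on_eq) (simp add: X_def d1)
  have cb: "continuous_on ?I (\<lambda>t. pi/2 - arctan (X t))" by (intro continuous_intros cX)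
  have "continuous_on ?I (\<lambda>t. cos (pi/2 - arctan (X t)) *\<^sub>R tangent ?I c t +
     sin (pi/2 - arctan (X t)) *\<^sub>R (cos (\<alpha> t) *\<^sub>R normal ?I c t + sin (\<alpha> t) *\<^sub>R binormal ?I c t))"
    by (intro continuous_intros cX fr(2) fr(3) fr(4) ca)
  then show "continuous_on ?I (ruling ?I c \<alpha>)"
    by (rule continuous_on_eq) (simp add: ruling_def Let_def sb)
  show "\<forall>t\<in>?I. \<exists>\<beta>. 0 < \<beta> \<and> \<beta> < pi \<and> ruling ?I c \<alpha> t =
        cos \<beta> *\<^sub>R tangent ?I c t + sin \<beta> *\<^sub>R (cos (\<alpha> t) *\<^sub>R normal ?I c t + sin (\<alpha> t) *\<^sub>R binormal ?I c t)"
  proof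
    fix t assume "t \<in> ?I"
    have "0 < pi/2 - arctan (X t)" "pi/2 - arctan (X t) < pi" using arctan_bounded[of "X t"] by auto
    then show "\<exists>\<beta>. 0 < \<beta> \<and> \<beta> < pi \<and> ruling ?I c \<alpha> t =
        cos \<beta> *\<^sub>R tangent ?I c t + sin \<beta> *\<^sub>R (cos (\<alpha> t) *\<^sub>R normal ?I c t + sin (\<alpha> t) *\<^sub>R binormal ?I c t)"
      by (intro exI[of _ "pi/2 - arctan (X t)"]) (simp add: ruling_def Let_def sb)
  qed
qed

lemma lin_lower:
  fixes e p q :: "real \<Rightarrow> real^3"
  assumes K: "compact K" "K \<noteq> {}"
    and ce: "continuous_on K e" and cp: "continuous_on K p" and cq: "continuous_on K q"
    and indep: "\<And>t x y z. t \<in> K \<Longrightarrow> x *\<^sub>R e t + y *\<^sub>R p t + z *\<^sub>R q t = 0 \<Longrightarrow> x = 0 \<and> y = 0 \<and> z = 0"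
  shows "\<exists>m>0. \<forall>t\<in>K. \<forall>x y z. m * (\<bar>x\<bar> + \<bar>y\<bar> + \<bar>z\<bar>) \<le> norm (x *\<^sub>R e t + y *\<^sub>R p t + z *\<^sub>R q t)"
proof -
  define S where "S = K \<times> sphere (0::real^3) 1"
  define F where "F w = norm (((snd w) $ 1) *\<^sub>R e (fst w) + ((snd w) $ 2) *\<^sub>R p (fst w) + ((snd w) $ 3) *\<^sub>R q (fst w))" for w :: "real \<times> (real^3)"
  have cS: "compact S" unfolding S_def by (intro compact_Times K compact_sphere)
  have "sphere (0::real^3) 1 \<noteq> {}" by simp
  then have nS: "S \<noteq> {}" unfolding S_def using K by auto
  have ce': "continuous_on S (\<lambda>w. e (fst w))"
    by (rule continuous_on_compose2[OF ce continuous_on_fst]) (auto simp: S_def)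
  have cp': "continuous_on S (\<lambda>w. p (fst w))"
    by (rule continuous_on_compose2[OF cp continuous_on_fst]) (auto simp: S_def)
  have cq': "continuous_on S (\<lambda>w. q (fst w))"
    by (rule continuous_on_compose2[OF cq continuous_on_fst]) (auto simp: S_def)
  have cF: "continuous_on S F" unfolding F_def
    by (intro continuous_intros ce' cp' cq')
  obtain w0 where w0: "w0 \<in> S" and mn: "\<And>w. w \<in> S \<Longrightarrow> F w0 \<le> F w"
    using continuous_attains_inf[OF cS nS cF] by blast
  have "F w0 \<noteq> 0"
  proof
    assume "F w0 = 0"
    then have "((snd w0) $ 1) *\<^sub>R e (fst w0) + ((snd w0) $ 2) *\<^sub>R p (fst w0) + ((snd w0) $ 3) *\<^sub>R q (fst w0) = 0"
      unfolding F_def by simp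
    then have "(snd w0) $ 1 = 0 \<and> (snd w0) $ 2 = 0 \<and> (snd w0) $ 3 = 0"
      using indep w0 unfolding S_def by auto
    then have "snd w0 = 0" by (simp add: vec_eq_iff forall_3)
    then show False using w0 unfolding S_def by auto
  qed
  then have m0: "F w0 > 0" unfolding F_def by simp
  show ?thesis
  proof (intro exI[of _ "F w0 / 3"] conjI ballI allI)
    show "F w0 / 3 > 0" using m0 by simp
    fix t x y z assume t: "t \<in> K"
    define w where "w = (vector [x, y, z] :: real^3)"
    have wc: "w $ 1 = x" "w $ 2 = y" "w $ 3 = z" unfolding w_def by simp_all
    have le: "\<bar>x\<bar> + \<bar>y\<bar> + \<bar>z\<bar> \<le> 3 * norm w"
      using component_le_norm_cart[of w 1] component_le_norm_cart[of w 2] component_le_norm_cart[of w 3] wc by simp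
    show "F w0 / 3 * (\<bar>x\<bar> + \<bar>y\<bar> + \<bar>z\<bar>) \<le> norm (x *\<^sub>R e t + y *\<^sub>R p t + z *\<^sub>R q t)"
    proof (cases "w = 0")
      case True
      then have "x = 0" "y = 0" "z = 0" using wc by auto
      then show ?thesis by simp
    next
      case False
      let ?u = "w /\<^sub>R norm w"
      have "(t, ?u) \<in> S" unfolding S_def using t False by simp
      then have "F w0 \<le> F (t, ?u)" by (rule mn)
      also have "F (t, ?u) = norm (x *\<^sub>R e t + y *\<^sub>R p t + z *\<^sub>R q t) / norm w"
      proof -
        have "(?u $ 1) *\<^sub>R e t + (?u $ 2) *\<^sub>R p t + (?u $ 3) *\<^sub>R q t = (1 / norm w) *\<^sub>R (x *\<^sub>R e t + y *\<^sub>R p t + z *\<^sub>R q t)"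
          using wc by (simp add: scaleR_add_right divide_inverse)
        then show ?thesis unfolding F_def by (simp add: divide_inverse mult.commute)
      qed
      finally have "F w0 * norm w \<le> norm (x *\<^sub>R e t + y *\<^sub>R p t + z *\<^sub>R q t)"
        using False by (simp add: pos_le_divide_eq)
      moreover have "F w0 / 3 * (\<bar>x\<bar> + \<bar>y\<bar> + \<bar>z\<bar>) \<le> F w0 * norm w"
        using le m0 by (simp add: mult_left_mono)
      ultimately show ?thesis by linarith
    qed
  qed
qed

lemma sep:
  fixes c :: "real \<Rightarrow> 'a::real_normed_vector"
  assumes K: "compact K" and cc: "continuous_on K c" and inj: "inj_on c K" and rho: "\<rho> > 0"
  shows "\<exists>\<delta>>0. \<forall>t\<in>K. \<forall>t'\<in>K. \<rho> \<le> \<bar>t - t'\<bar> \<longrightarrow> \<delta> \<le> norm (c t - c t')"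
proof -
  define P where "P = (K \<times> K) \<inter> {p. \<rho> \<le> \<bar>fst p - snd p\<bar>}"
  have "closed {p::real\<times>real. \<rho> \<le> \<bar>fst p - snd p\<bar>}"
    by (intro closed_Collect_le continuous_intros)
  then have cP: "compact P" unfolding P_def by (intro compact_Int_closed compact_Times K)
  show ?thesis
  proof (cases "P = {}")
    case True
    show ?thesis
    proof (intro exI[of _ 1] conjI ballI impI)
      fix t t' assume "t \<in> K" "t' \<in> K" "\<rho> \<le> \<bar>t - t'\<bar>"
      then have "(t, t') \<in> P" unfolding P_def by simp
      then show "1 \<le> norm (c t - c t')" using True by blast
    qed simp
  next
    case False
    have c1: "continuous_on P (\<lambda>p. c (fst p))"
      by (rule continuous_on_compose2[OF cc continuous_on_fst]) (auto simp: P_def)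
    have c2: "continuous_on P (\<lambda>p. c (snd p))"
      by (rule continuous_on_compose2[OF cc continuous_on_snd]) (auto simp: P_def)
    have cG: "continuous_on P (\<lambda>p. norm (c (fst p) - c (snd p)))"
      by (intro continuous_intros c1 c2)
    obtain p0 where p0: "p0 \<in> P" and mn: "\<And>p. p \<in> P \<Longrightarrow> norm (c (fst p0) - c (snd p0)) \<le> norm (c (fst p) - c (snd p))"
      using continuous_attains_inf[OF cP False cG] by blast
    have pK: "fst p0 \<in> K" "snd p0 \<in> K" "\<rho> \<le> \<bar>fst p0 - snd p0\<bar>" using p0 unfolding P_def by auto
    then have "fst p0 \<noteq> snd p0" using rho by auto
    then have "c (fst p0) \<noteq> c (snd p0)" using inj pK unfolding inj_on_def by blast
    then have pos: "norm (c (fst p0) - c (snd p0)) > 0" by simp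
    show ?thesis
    proof (intro exI[of _ "norm (c (fst p0) - c (snd p0))"] conjI pos ballI impI)
      fix t t' assume "t \<in> K" "t' \<in> K" "\<rho> \<le> \<bar>t - t'\<bar>"
      then have "(t, t') \<in> P" unfolding P_def by simp
      from mn[OF this] show "norm (c (fst p0) - c (snd p0)) \<le> norm (c t - c t')" by simp
    qed
  qed
qed

lemma taylor:
  fixes c e :: "real \<Rightarrow> 'a::real_normed_vector"
  assumes der: "\<And>s. s \<in> {a..b} \<Longrightarrow> (c has_vector_derivative e s) (at s within {a..b})"
    and t: "t \<in> {a..b}" and t': "t' \<in> {a..b}"
    and B: "\<And>s. s \<in> closed_segment t t' \<Longrightarrow> norm (e s - e t) \<le> B"
  shows "norm (c t' - c t - (t' - t) *\<^sub>R e t) \<le> \<bar>t' - t\<bar> * B"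
proof -
  have sub: "closed_segment t t' \<subseteq> {a..b}"
    using t t' by (auto simp: closed_segment_eq_real_ivl split: if_splits)
  have "norm (c t' - c t - (t' - t) *\<^sub>R e t) \<le> norm (t' - t) * B"
  proof (rule vector_differentiable_bound_linearization[of "closed_segment t t'" c e t t' t B])
    fix x assume x: "x \<in> closed_segment t t'"
    then have "x \<in> {a..b}" using sub by auto
    then show "(c has_vector_derivative e x) (at x within closed_segment t t')"
      using has_vector_derivative_within_subset[OF der sub] by blast
  next
    fix x assume x: "x \<in> closed_segment t t'"
    then show "norm (e x - e t) \<le> B" using B by blast
  qed auto
  then show ?thesis by simp
qed

lemma uc_get:
  fixes f :: "real \<Rightarrow> 'a::real_normed_vector"
  assumes "compact K" "continuous_on K f" "\<eta> > 0"
  shows "\<exists>d>0. \<forall>s\<in>K. \<forall>t\<in>K. \<bar>s - t\<bar> < d \<longrightarrow> norm (f s - f t) < \<eta>"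
proof -
  have "uniformly_continuous_on K f" using compact_uniformly_continuous assms by blast
  then obtain d where "d > 0" "\<forall>x\<in>K. \<forall>x'\<in>K. dist x' x < d \<longrightarrow> dist (f x') (f x) < \<eta>"
    using assms(3) unfolding uniformly_continuous_on_def by blast
  then show ?thesis by (intro exI[of _ d]) (auto simp: dist_norm)
qed

lemma norm3:
  fixes e n b :: "'a::real_normed_vector"
  assumes "norm e = 1" "norm n = 1" "norm b = 1"
  shows "norm (cos \<beta> *\<^sub>R e + sin \<beta> *\<^sub>R (cos \<alpha> *\<^sub>R n + sin \<alpha> *\<^sub>R b)) \<le> 3"
proof -
  have 1: "norm (cos \<alpha> *\<^sub>R n + sin \<alpha> *\<^sub>R b) \<le> \<bar>cos \<alpha>\<bar> + \<bar>sin \<alpha>\<bar>"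
    using norm_triangle_ineq[of "cos \<alpha> *\<^sub>R n" "sin \<alpha> *\<^sub>R b"] assms by simp
  have 2: "\<bar>cos \<alpha>\<bar> + \<bar>sin \<alpha>\<bar> \<le> 2" using abs_cos_le_one[of \<alpha>] abs_sin_le_one[of \<alpha>] by linarith
  have 3: "norm (sin \<beta> *\<^sub>R (cos \<alpha> *\<^sub>R n + sin \<alpha> *\<^sub>R b)) \<le> 2"
  proof -
    have "norm (sin \<beta> *\<^sub>R (cos \<alpha> *\<^sub>R n + sin \<alpha> *\<^sub>R b)) = \<bar>sin \<beta>\<bar> * norm (cos \<alpha> *\<^sub>R n + sin \<alpha> *\<^sub>R b)" by simp
    also have "\<dots> \<le> 1 * 2" using 1 2 abs_sin_le_one[of \<beta>] by (intro mult_mono) auto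
    finally show ?thesis by simp
  qed
  have 4: "norm (cos \<beta> *\<^sub>R e) \<le> 1" using assms abs_cos_le_one[of \<beta>] by simp
  show ?thesis using norm_triangle_ineq[of "cos \<beta> *\<^sub>R e" "sin \<beta> *\<^sub>R (cos \<alpha> *\<^sub>R n + sin \<alpha> *\<^sub>R b)"] 3 4 by linarith
qed

lemma close_case:
  fixes Et Pt Qt Xt Yt Y' c0 c' :: "'a::real_normed_vector"
  assumes m: "m > 0"
    and Lb: "m * (\<bar>x\<bar> + \<bar>y\<bar> + \<bar>z\<bar>) \<le> norm (x *\<^sub>R Et + y *\<^sub>R Pt + z *\<^sub>R Qt)"
    and T: "norm (c' - c0 - d *\<^sub>R Et) \<le> \<bar>d\<bar> * (m/4)"
    and Y: "norm (Y' - Yt) \<le> m/4"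
    and eq: "c0 + v *\<^sub>R Xt = c' + v' *\<^sub>R Y'"
    and lin: "d *\<^sub>R Et + v' *\<^sub>R Yt - v *\<^sub>R Xt = x *\<^sub>R Et + y *\<^sub>R Pt + z *\<^sub>R Qt"
    and sz: "\<bar>d\<bar> + \<bar>v'\<bar> \<le> \<bar>x\<bar> + \<bar>y\<bar> + \<bar>z\<bar>"
  shows "x = 0 \<and> y = 0 \<and> z = 0"
proof -
  define R where "R = (c' - c0 - d *\<^sub>R Et) + v' *\<^sub>R (Y' - Yt)"
  have c': "c' = c0 + v *\<^sub>R Xt - v' *\<^sub>R Y'" using eq by (simp add: algebra_simps)
  have "x *\<^sub>R Et + y *\<^sub>R Pt + z *\<^sub>R Qt = - R"
    unfolding lin[symmetric] R_def c' by (simp add: algebra_simps)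
  then have e1: "norm (x *\<^sub>R Et + y *\<^sub>R Pt + z *\<^sub>R Qt) = norm R" by simp
  have "norm R \<le> norm (c' - c0 - d *\<^sub>R Et) + norm (v' *\<^sub>R (Y' - Yt))"
    unfolding R_def by (rule norm_triangle_ineq)
  also have "norm (v' *\<^sub>R (Y' - Yt)) \<le> \<bar>v'\<bar> * (m/4)"
    using mult_left_mono[OF Y, of "\<bar>v'\<bar>"] by simp
  finally have "norm R \<le> \<bar>d\<bar> * (m/4) + \<bar>v'\<bar> * (m/4)" using T by linarith
  also have "\<dots> = (\<bar>d\<bar> + \<bar>v'\<bar>) * (m/4)" by (simp add: algebra_simps)
  also have "\<dots> \<le> (\<bar>x\<bar> + \<bar>y\<bar> + \<bar>z\<bar>) * (m/4)" using sz m by (intro mult_right_mono) auto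
  finally have "m * (\<bar>x\<bar> + \<bar>y\<bar> + \<bar>z\<bar>) \<le> (\<bar>x\<bar> + \<bar>y\<bar> + \<bar>z\<bar>) * (m/4)" using Lb e1 by linarith
  moreover have "(\<bar>x\<bar> + \<bar>y\<bar> + \<bar>z\<bar>) * (m/4) = (m * (\<bar>x\<bar> + \<bar>y\<bar> + \<bar>z\<bar>)) / 4" by simp
  ultimately have "m * (\<bar>x\<bar> + \<bar>y\<bar> + \<bar>z\<bar>) \<le> 0" by linarith
  then have "\<bar>x\<bar> + \<bar>y\<bar> + \<bar>z\<bar> \<le> 0"
    using m by (meson mult_pos_pos not_le)
  then show ?thesis by auto
qed

theorem lemma1p1:
  fixes c :: "real \<Rightarrow> real^3" and \<alpha> :: "real \<Rightarrow> real" and a b :: real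
  assumes "a < b"
    and "Cinf_on {a..b} c"
    and "inj_on c {a..b}"
    and "\<forall>t\<in>{a..b}. norm (vd {a..b} c t) = 1"
    and "\<forall>t\<in>{a..b}. curvature {a..b} c t > 0"
    and "Cinf_on {a..b} \<alpha>"
    and "\<forall>t\<in>{a..b}. 0 < \<bar>\<alpha> t\<bar> \<and> \<bar>\<alpha> t\<bar> < pi / 2"
  shows "\<exists>\<epsilon>0>0. \<forall>\<epsilon>. 0 < \<epsilon> \<and> \<epsilon> \<le> \<epsilon>0 \<longrightarrow>
           interior {p \<in> Omega a b \<epsilon>. \<exists>q \<in> Omega a b \<epsilon> - {p}.
              origami_phi {a..b} c \<alpha> p = origami_psi {a..b} c \<alpha> q} = {}"
proof -
  let ?I = "{a..b}"
  note fr = frame[OF assms(1,2,4,5)]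
  have A': "Cinf_on ?I (\<lambda>t. - \<alpha> t)" using Cinf_neg assms(6) .
  have bd': "\<forall>t\<in>?I. 0 < \<bar>- \<alpha> t\<bar> \<and> \<bar>- \<alpha> t\<bar> < pi / 2" using assms(7) by simp
  note rp = ruling_facts[OF assms(1,2,4,5,6,7)]
  note rm = ruling_facts[OF assms(1,2,4,5) A' bd']
  define E where "E = tangent ?I c"
  define N where "N = normal ?I c"
  define B where "B = binormal ?I c"
  define P where "P = ruling ?I c \<alpha>"
  define Q where "Q = ruling ?I c (\<lambda>t. - \<alpha> t)"
  have ee: "E t \<bullet> E t = 1" and nn: "N t \<bullet> N t = 1" and bb: "B t \<bullet> B t = 1"
    and en: "E t \<bullet> N t = 0" and eb: "E t \<bullet> B t = 0" and nb: "N t \<bullet> B t = 0"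
    if "t \<in> ?I" for t
    using fr(8-13) that unfolding E_def N_def B_def by auto
  have ne: "N t \<bullet> E t = 0" and be: "B t \<bullet> E t = 0" and bn: "B t \<bullet> N t = 0" if "t \<in> ?I" for t
    using en[OF that] eb[OF that] nb[OF that] by (simp_all add: inner_commute)
  have repP: "\<exists>\<beta>. 0 < \<beta> \<and> \<beta> < pi \<and> P t = cos \<beta> *\<^sub>R E t + sin \<beta> *\<^sub>R (cos (\<alpha> t) *\<^sub>R N t + sin (\<alpha> t) *\<^sub>R B t)"
    if "t \<in> ?I" for t using rp(2) that unfolding P_def E_def N_def B_def by blast
  have repQ: "\<exists>\<beta>. 0 < \<beta> \<and> \<beta> < pi \<and> Q t = cos \<beta> *\<^sub>R E t + sin \<beta> *\<^sub>R (cos (\<alpha> t) *\<^sub>R N t - sin (\<alpha> t) *\<^sub>R B t)"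
    if "t \<in> ?I" for t using rm(2) that unfolding Q_def E_def N_def B_def by auto
  have cE: "continuous_on ?I E" and cP: "continuous_on ?I P" and cQ: "continuous_on ?I Q"
    using fr(2) rp(1) rm(1) unfolding E_def P_def Q_def by auto
  have nE1: "norm (E t) = 1" and nN1: "norm (N t) = 1" and nB1: "norm (B t) = 1" if "t \<in> ?I" for t
    using ee[OF that] nn[OF that] bb[OF that] by (simp_all add: norm_eq_1)
  have nP: "norm (P t) \<le> 3" if "t \<in> ?I" for t
    using repP[OF that] norm3[OF nE1[OF that] nN1[OF that] nB1[OF that]] by auto
  have nQ: "norm (Q t) \<le> 3" if tt: "t \<in> ?I" for t
  proof -
    obtain \<beta> where "Q t = cos \<beta> *\<^sub>R E t + sin \<beta> *\<^sub>R (cos (\<alpha> t) *\<^sub>R N t - sin (\<alpha> t) *\<^sub>R B t)"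
      using repQ[OF tt] by blast
    then have "Q t = cos \<beta> *\<^sub>R E t + sin \<beta> *\<^sub>R (cos (- \<alpha> t) *\<^sub>R N t + sin (- \<alpha> t) *\<^sub>R B t)" by simp
    then show ?thesis using norm3[OF nE1[OF tt] nN1[OF tt] nB1[OF tt], of \<beta> "- \<alpha> t"] by simp
  qed
  have indep: "x = 0 \<and> y = 0 \<and> z = 0"
    if t: "t \<in> ?I" and h: "x *\<^sub>R E t + y *\<^sub>R P t + z *\<^sub>R Q t = 0" for t x y z
  proof -
    obtain bp where bp: "0 < bp" "bp < pi" and Pt: "P t = cos bp *\<^sub>R E t + sin bp *\<^sub>R (cos (\<alpha> t) *\<^sub>R N t + sin (\<alpha> t) *\<^sub>R B t)"
      using repP[OF t] by blast
    obtain bm where bm: "0 < bm" "bm < pi" and Qt: "Q t = cos bm *\<^sub>R E t + sin bm *\<^sub>R (cos (\<alpha> t) *\<^sub>R N t - sin (\<alpha> t) *\<^sub>R B t)"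
      using repQ[OF t] by blast
    have sp: "sin bp > 0" using sin_gt_zero bp by blast
    have sm: "sin bm > 0" using sin_gt_zero bm by blast
    have ca: "cos (\<alpha> t) > 0" using cos_pos assms(7) t by blast
    have sa: "sin (\<alpha> t) \<noteq> 0" using sin_nz assms(7) t by blast
    have "(x *\<^sub>R E t + y *\<^sub>R P t + z *\<^sub>R Q t) \<bullet> N t = 0" using h by simp
    then have "cos (\<alpha> t) * (y * sin bp + z * sin bm) = 0"
      unfolding Pt Qt using en[OF t] nn[OF t] bn[OF t]
      by (simp add: inner_add_left inner_diff_left algebra_simps)
    then have n1: "y * sin bp + z * sin bm = 0" using ca by simp
    have "(x *\<^sub>R E t + y *\<^sub>R P t + z *\<^sub>R Q t) \<bullet> B t = 0" using h by simp
    then have "sin (\<alpha> t) * (y * sin bp - z * sin bm) = 0"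
      unfolding Pt Qt using eb[OF t] nb[OF t] bb[OF t]
      by (simp add: inner_add_left inner_diff_left algebra_simps)
    then have n2: "y * sin bp - z * sin bm = 0" using sa by simp
    from n1 n2 have "y * sin bp = 0" "z * sin bm = 0" by linarith+
    then have yz: "y = 0" "z = 0" using sp sm by auto
    then have "x *\<^sub>R E t = 0" using h by simp
    then have "x = 0" using nE1[OF t] by auto
    then show ?thesis using yz by simp
  qed
  obtain m where m: "m > 0"
    and Lb: "\<forall>t\<in>?I. \<forall>x y z. m * (\<bar>x\<bar> + \<bar>y\<bar> + \<bar>z\<bar>) \<le> norm (x *\<^sub>R E t + y *\<^sub>R P t + z *\<^sub>R Q t)"
  proof -
    have "\<exists>m>0. \<forall>t\<in>?I. \<forall>x y z. m * (\<bar>x\<bar> + \<bar>y\<bar> + \<bar>z\<bar>) \<le> norm (x *\<^sub>R E t + y *\<^sub>R P t + z *\<^sub>R Q t)"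
    proof (rule lin_lower[OF compact_Icc _ cE cP cQ])
      show "{a..b} \<noteq> {}" using assms(1) by simp
    next
      fix t x y z assume "t \<in> ?I" "x *\<^sub>R E t + y *\<^sub>R P t + z *\<^sub>R Q t = 0"
      then show "x = 0 \<and> y = 0 \<and> z = 0" by (rule indep)
    qed
    then show ?thesis using that by blast
  qed
  have m4: "m / 4 > 0" using m by simp
  obtain d1 where d1: "d1 > 0" "\<forall>s\<in>?I. \<forall>t\<in>?I. \<bar>s - t\<bar> < d1 \<longrightarrow> norm (E s - E t) < m/4"
    using uc_get[OF compact_Icc cE m4] by blast
  obtain d2 where d2: "d2 > 0" "\<forall>s\<in>?I. \<forall>t\<in>?I. \<bar>s - t\<bar> < d2 \<longrightarrow> norm (P s - P t) < m/4"
    using uc_get[OF compact_Icc cP m4] by blast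
  obtain d3 where d3: "d3 > 0" "\<forall>s\<in>?I. \<forall>t\<in>?I. \<bar>s - t\<bar> < d3 \<longrightarrow> norm (Q s - Q t) < m/4"
    using uc_get[OF compact_Icc cQ m4] by blast
  define \<rho> where "\<rho> = min d1 (min d2 d3)"
  have rho: "\<rho> > 0" using d1 d2 d3 unfolding \<rho>_def by simp
  obtain \<delta> where del: "\<delta> > 0" and sepd: "\<forall>t\<in>?I. \<forall>t'\<in>?I. \<rho> \<le> \<bar>t - t'\<bar> \<longrightarrow> \<delta> \<le> norm (c t - c t')"
    using sep[OF compact_Icc fr(1) assms(3) rho] by blast
  have der: "\<And>s. s \<in> ?I \<Longrightarrow> (c has_vector_derivative E s) (at s within ?I)"
    using fr(7) unfolding E_def by blast
  have phi: "origami_phi ?I c \<alpha> (t, v) = (if v \<ge> 0 then c t + v *\<^sub>R P t else c t + v *\<^sub>R Q t)" for t v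
    unfolding origami_phi_def dual_strip_def dev_strip_def P_def Q_def by simp
  have psi: "origami_psi ?I c \<alpha> (t, v) = (if v \<ge> 0 then c t + v *\<^sub>R Q t else c t + v *\<^sub>R P t)" for t v
    unfolding origami_psi_def dual_strip_def dev_strip_def P_def Q_def by simp
  have key: False
    if t: "t \<in> ?I" and t': "t' \<in> ?I" and v: "\<bar>v\<bar> < \<epsilon>" and v': "\<bar>v'\<bar> < \<epsilon>" and eps: "\<epsilon> \<le> \<delta> / 6"
      and ne: "(t', v') \<noteq> (t, v)"
      and eq: "origami_phi ?I c \<alpha> (t, v) = origami_psi ?I c \<alpha> (t', v')"
    for t v t' v' \<epsilon>
  proof (cases "\<rho> \<le> \<bar>t - t'\<bar>")
    case True
    then have "\<delta> \<le> norm (c t - c t')" using sepd t t' by blast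
    moreover obtain X Y where X: "norm X \<le> 3" and Y: "norm Y \<le> 3" and eq2: "c t + v *\<^sub>R X = c t' + v' *\<^sub>R Y"
    proof -
      consider "v \<ge> 0" "v' \<ge> 0" | "v \<ge> 0" "v' < 0" | "v < 0" "v' \<ge> 0" | "v < 0" "v' < 0" by linarith
      then show ?thesis
      proof cases
        case 1 then show ?thesis using that[of "P t" "Q t'"] eq nP[OF t] nQ[OF t'] by (simp add: phi psi)
      next
        case 2 then show ?thesis using that[of "P t" "P t'"] eq nP[OF t] nP[OF t'] by (simp add: phi psi)
      next
        case 3 then show ?thesis using that[of "Q t" "Q t'"] eq nQ[OF t] nQ[OF t'] by (simp add: phi psi)
      next
        case 4 then show ?thesis using that[of "Q t" "P t'"] eq nQ[OF t] nP[OF t'] by (simp add: phi psi)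
      qed
    qed
    moreover have "c t - c t' = v' *\<^sub>R Y - v *\<^sub>R X" using eq2 by (simp add: algebra_simps)
    moreover have "norm (v' *\<^sub>R Y - v *\<^sub>R X) \<le> \<bar>v'\<bar> * 3 + \<bar>v\<bar> * 3"
    proof -
      have "norm (v' *\<^sub>R Y - v *\<^sub>R X) \<le> norm (v' *\<^sub>R Y) + norm (v *\<^sub>R X)" by (rule norm_triangle_ineq4)
      also have "norm (v' *\<^sub>R Y) \<le> \<bar>v'\<bar> * 3" using mult_left_mono[OF Y, of "\<bar>v'\<bar>"] by simp
      also have "norm (v *\<^sub>R X) \<le> \<bar>v\<bar> * 3" using mult_left_mono[OF X, of "\<bar>v\<bar>"] by simp
      finally show ?thesis by simp
    qed
    ultimately have "\<delta> \<le> \<bar>v'\<bar> * 3 + \<bar>v\<bar> * 3" by simp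
    then show False using v v' eps by linarith
  next
    case False
    then have close: "\<bar>t' - t\<bar> < \<rho>" by simp
    have seg: "\<bar>s - t\<bar> < \<rho>" if "s \<in> closed_segment t t'" for s
      using that close by (auto simp: closed_segment_eq_real_ivl split: if_splits)
    have segI: "s \<in> ?I" if "s \<in> closed_segment t t'" for s
      using that t t' by (auto simp: closed_segment_eq_real_ivl split: if_splits)
    have T: "norm (c t' - c t - (t' - t) *\<^sub>R E t) \<le> \<bar>t' - t\<bar> * (m/4)"
    proof (rule taylor[OF der t t'])
      fix s assume s: "s \<in> closed_segment t t'"
      then show "norm (E s - E t) \<le> m/4" using d1(2) segI[OF s] t seg[OF s] unfolding \<rho>_def
        by (meson less_imp_le min_less_iff_conj)
    qed
    have YP: "norm (P t' - P t) \<le> m/4" using d2(2) t t' close unfolding \<rho>_def by (meson less_imp_le min_less_iff_conj)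
    have YQ: "norm (Q t' - Q t) \<le> m/4" using d3(2) t t' close unfolding \<rho>_def by (meson less_imp_le min_less_iff_conj)
    have Lt: "\<And>x y z. m * (\<bar>x\<bar> + \<bar>y\<bar> + \<bar>z\<bar>) \<le> norm (x *\<^sub>R E t + y *\<^sub>R P t + z *\<^sub>R Q t)"
      using Lb t by blast
    consider "v \<ge> 0" "v' \<ge> 0" | "v \<ge> 0" "v' < 0" | "v < 0" "v' \<ge> 0" | "v < 0" "v' < 0" by linarith
    then show False
    proof cases
      case 1
      then have e: "c t + v *\<^sub>R P t = c t' + v' *\<^sub>R Q t'" using eq by (simp add: phi psi)
      have "t' - t = 0 \<and> - v = 0 \<and> v' = 0"
        by (rule close_case[OF m Lt T YQ e]) (simp_all add: algebra_simps)
      then show False using ne by simp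
    next
      case 2
      then have e: "c t + v *\<^sub>R P t = c t' + v' *\<^sub>R P t'" using eq by (simp add: phi psi)
      have "t' - t = 0 \<and> v' - v = 0 \<and> (0::real) = 0"
        by (rule close_case[OF m Lt T YP e]) (use 2 in \<open>simp_all add: algebra_simps\<close>)
      then show False using 2 by simp
    next
      case 3
      then have e: "c t + v *\<^sub>R Q t = c t' + v' *\<^sub>R Q t'" using eq by (simp add: phi psi)
      have "t' - t = 0 \<and> (0::real) = 0 \<and> v' - v = 0"
        by (rule close_case[OF m Lt T YQ e]) (use 3 in \<open>simp_all add: algebra_simps\<close>)
      then show False using 3 by simp
    next
      case 4
      then have e: "c t + v *\<^sub>R Q t = c t' + v' *\<^sub>R P t'" using eq by (simp add: phi psi)
      have "t' - t = 0 \<and> v' = 0 \<and> - v = 0"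
        by (rule close_case[OF m Lt T YP e]) (simp_all add: algebra_simps)
      then show False using 4 by simp
    qed
  qed
  show ?thesis
  proof (intro exI[of _ "\<delta> / 6"] conjI allI impI)
    show "\<delta> / 6 > 0" using del by simp
    fix \<epsilon> assume h\<epsilon>: "0 < \<epsilon> \<and> \<epsilon> \<le> \<delta> / 6"
    have "{p \<in> Omega a b \<epsilon>. \<exists>q \<in> Omega a b \<epsilon> - {p}.
              origami_phi ?I c \<alpha> p = origami_psi ?I c \<alpha> q} = {}"
    proof (rule ccontr)
      assume "{p \<in> Omega a b \<epsilon>. \<exists>q \<in> Omega a b \<epsilon> - {p}.
              origami_phi ?I c \<alpha> p = origami_psi ?I c \<alpha> q} \<noteq> {}"
      then obtain p q where p: "p \<in> Omega a b \<epsilon>" and q: "q \<in> Omega a b \<epsilon>" "q \<noteq> p"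
        and pq: "origami_phi ?I c \<alpha> p = origami_psi ?I c \<alpha> q" by blast
      obtain t v where pe: "p = (t, v)" by (cases p)
      obtain t' v' where qe: "q = (t', v')" by (cases q)
      show False
        by (rule key[of t t' v \<epsilon> v']) (use p q pq h\<epsilon> in \<open>auto simp: pe qe Omega_def abs_less_iff\<close>)
    qed
    then show "interior {p \<in> Omega a b \<epsilon>. \<exists>q \<in> Omega a b \<epsilon> - {p}.
              origami_phi ?I c \<alpha> p = origami_psi ?I c \<alpha> q} = {}" by (metis interior_empty)
  qed
qed

end
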